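(* Let $g_{00},g_{11},g_{22},g_{33}$ solve system (SL) with positive initial data satisfying $h_{22}\le h_{33}$. Then $g_{11}^{3/5}\,g_{22}$ is strictly increasing along the flow.
   Context: Let $\det h = h_{00}h_{11}h_{22}h_{33}$, $\beta = \frac{1}{6(\det h)^2}$, and $p(x,y,z) = x^4 - x^3(y+z) + x^2yz + x(-y^3+y^2z+yz^2-z^3) + y^4 - y^3z - yz^3 + z^4$, $q(x,y,z) = 5x^4 - 3x^3(y+z) + x^2yz + x(y^3-y^2z-yz^2+z^3) - 3y^4 + 3y^3z + 3yz^3 - 3z^4$. System (SL): $\dot g_{00} = -\beta\,p(-g_{11},g_{22},g_{33})\,g_{00}^3$, $\dot g_{11} = -\beta\,q(-g_{11},g_{22},g_{33})\,g_{00}^2g_{11}$, $\dot g_{22} = -\beta\,q(g_{22},-g_{11},g_{33})\,g_{00}^2g_{22}$, $\dot g_{33} = -\beta\,q(g_{33},-g_{11},g_{22})\,g_{00}^2g_{33}$, with $g_{ii}(0)=h_{ii}>0$. (This is Bach flow on $\mathbb{R}\times\widetilde{SL}(2,\mathbb{R})$ in a diagonalizing basis.) *)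

theory Defs
  imports "HOL-Analysis.Analysis"
begin

definition pSL :: "real \<Rightarrow> real \<Rightarrow> real \<Rightarrow> real" where
  "pSL x y z = x^4 - x^3*(y+z) + x^2*y*z + x*(- (y^3) + y^2*z + y*z^2 - z^3)
              + y^4 - y^3*z - y*z^3 + z^4"

definition qSL :: "real \<Rightarrow> real \<Rightarrow> real \<Rightarrow> real" where
  "qSL x y z = 5*x^4 - 3*x^3*(y+z) + x^2*y*z + x*(y^3 - y^2*z - y*z^2 + z^3)
              - 3*y^4 + 3*y^3*z + 3*y*z^3 - 3*z^4"

definition betaSL :: "real \<Rightarrow> real \<Rightarrow> real \<Rightarrow> real \<Rightarrow> real" where
  "betaSL h00 h11 h22 h33 = 1 / (6 * (h00*h11*h22*h33)^2)"

end

theory Submission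
  imports Defs "HOL-Analysis.Analysis"
begin


lemma lin_ode:
  fixes f a :: "real \<Rightarrow> real" and T t :: real
  assumes t: "t \<in> {0..<T}"
    and d: "\<And>s. s \<in> {0..<T} \<Longrightarrow> (f has_real_derivative a s * f s) (at s within {0..<T})"
    and c: "continuous_on {0..<T} a"
  shows "f t = f 0 * exp (integral {0..t} a)"
proof -
  have sub: "{0..t} \<subseteq> {0..<T}" using t by auto
  have ca: "continuous_on {0..t} a" using c sub continuous_on_subset by blast
  define A where "A s = integral {0..s} a" for s
  have dA: "\<And>s. s\<in>{0..t} \<Longrightarrow> (A has_real_derivative a s) (at s within {0..t})"
    using integral_has_real_derivative[OF ca] unfolding A_def by blast
  define w where "w s = f s * exp (- A s)" for s
  have dw: "(w has_real_derivative 0) (at s within {0..t})" if s: "s\<in>{0..t}" for s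
  proof -
    have df: "(f has_real_derivative a s * f s) (at s within {0..t})"
      using DERIV_subset[OF d sub] s sub by auto
    have dm: "((\<lambda>s. - A s) has_real_derivative - a s) (at s within {0..t})"
      by (rule DERIV_minus[OF dA[OF s]])
    have de: "((\<lambda>s. exp (- A s)) has_real_derivative exp (- A s) * (- a s)) (at s within {0..t})"
      by (rule DERIV_chain2[OF DERIV_exp dm])
    have "(w has_real_derivative (a s * f s) * exp (- A s) + f s * (exp (- A s) * (- a s))) (at s within {0..t})"
      unfolding w_def using DERIV_mult'[OF df de] by simp
    moreover have "(a s * f s) * exp (- A s) + f s * (exp (- A s) * (- a s)) = 0" by (simp add: algebra_simps)
    ultimately show ?thesis by simp
  qed
  obtain cc where "\<forall>x\<in>{0..t}. w x = cc"
    using has_field_derivative_zero_constant[of "{0..t}" w] dw by auto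
  then have "w t = w 0" using t by auto
  then have "f t * exp (- A t) = f 0" unfolding w_def A_def by simp
  then have "f t = f 0 * exp (A t)"
    by (metis exp_minus_inverse mult.assoc mult.commute mult_1)
  then show ?thesis unfolding A_def .
qed

lemma lin_pos:
  fixes f a :: "real \<Rightarrow> real" and T t :: real
  assumes t: "t \<in> {0..<T}"
    and d: "\<And>s. s \<in> {0..<T} \<Longrightarrow> (f has_real_derivative a s * f s) (at s within {0..<T})"
    and c: "continuous_on {0..<T} a" and p: "f 0 > 0"
  shows "f t > 0"
  using lin_ode[OF t d c] p by simp

lemma lin_nonneg:
  fixes f a :: "real \<Rightarrow> real" and T t :: real
  assumes t: "t \<in> {0..<T}"
    and d: "\<And>s. s \<in> {0..<T} \<Longrightarrow> (f has_real_derivative a s * f s) (at s within {0..<T})"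
    and c: "continuous_on {0..<T} a" and p: "f 0 \<ge> 0"
  shows "f t \<ge> 0"
  using lin_ode[OF t d c] p by simp

lemma F_neg:
  fixes x y z :: real
  assumes "x > 0" "y > 0" "y \<le> z"
  shows "3/5 * qSL (- x) y z + qSL y (- x) z < 0"
proof -
  define w where "w = z - y"
  have s: "w \<ge> 0" "z = y + w" using assms(3) unfolding w_def by simp_all
  have e: "3/5 * qSL (- x) y z + qSL y (- x) z = - (2/5*x^3*y + 6/5*x^3*w + 2/5*x^2*y^2 + 2/5*x^2*y*w
     + 8*x*y^2*w + 46/5*x*y*w^2 + 18/5*x*w^3 + 12*y^3*w + 102/5*y^2*w^2 + 82/5*y*w^3 + 24/5*w^4)"
    unfolding qSL_def s(2) by algebra
  have "0 < 2/5*x^3*y" using assms by simp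
  moreover have "0 \<le> 6/5*x^3*w + 2/5*x^2*y^2 + 2/5*x^2*y*w
     + 8*x*y^2*w + 46/5*x*y*w^2 + 18/5*x*w^3 + 12*y^3*w + 102/5*y^2*w^2 + 82/5*y*w^3 + 24/5*w^4"
    using assms s by (intro add_nonneg_nonneg mult_nonneg_nonneg) auto
  ultimately show ?thesis unfolding e by linarith
qed

definition Kp :: "real \<Rightarrow> real \<Rightarrow> real \<Rightarrow> real" where
  "Kp x y z = -3*x^4 - x^3*y - x^3*z - x^2*y*z + 3*x*y^3
     + 5*x*y^2*z + 5*x*y*z^2 + 3*x*z^3 + 5*y^4 + 5*y^3*z + 4*y^2*z^2 + 5*y*z^3 + 5*z^4"

lemma K_fact:
  fixes x y z :: real
  shows "qSL z (- x) y * z - qSL y (- x) z * y = (z - y) * Kp x y z"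
  unfolding qSL_def Kp_def by algebra

lemma alg_h:
  fixes P1 x P B Q1 Q2 u y :: real
  assumes "P1 * x = P"
  shows "P * (- B * Q2 * u^2 * y) + 3/5 * P1 * (- B * Q1 * u^2 * x) * y = P * y * B * u^2 * (-(3/5*Q1 + Q2))"
  unfolding assms[symmetric] by (simp add: algebra_simps)

theorem lemma5p12:
  fixes g00 g11 g22 g33 :: "real \<Rightarrow> real" and T h00 h11 h22 h33 :: real
  assumes T: "T > 0"
    and pos: "h00 > 0" "h11 > 0" "h22 > 0" "h33 > 0"
    and ord: "h22 \<le> h33"
    and init: "g00 0 = h00" "g11 0 = h11" "g22 0 = h22" "g33 0 = h33"
    and ode00: "\<And>t. t \<in> {0..<T} \<Longrightarrow> (g00 has_real_derivative
        (- betaSL h00 h11 h22 h33 * pSL (- g11 t) (g22 t) (g33 t) * g00 t ^ 3)) (at t within {0..<T})"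
    and ode11: "\<And>t. t \<in> {0..<T} \<Longrightarrow> (g11 has_real_derivative
        (- betaSL h00 h11 h22 h33 * qSL (- g11 t) (g22 t) (g33 t) * g00 t ^ 2 * g11 t)) (at t within {0..<T})"
    and ode22: "\<And>t. t \<in> {0..<T} \<Longrightarrow> (g22 has_real_derivative
        (- betaSL h00 h11 h22 h33 * qSL (g22 t) (- g11 t) (g33 t) * g00 t ^ 2 * g22 t)) (at t within {0..<T})"
    and ode33: "\<And>t. t \<in> {0..<T} \<Longrightarrow> (g33 has_real_derivative
        (- betaSL h00 h11 h22 h33 * qSL (g33 t) (- g11 t) (g22 t) * g00 t ^ 2 * g33 t)) (at t within {0..<T})"
  shows "strict_mono_on {0..<T} (\<lambda>t. g11 t powr (3/5) * g22 t)"
proof -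
  define B where "B = betaSL h00 h11 h22 h33"
  have Bpos: "B > 0" unfolding B_def betaSL_def using pos by simp
  note D00 = ode00[folded B_def] and D11 = ode11[folded B_def]
    and D22 = ode22[folded B_def] and D33 = ode33[folded B_def]
  have c00: "continuous_on {0..<T} g00" by (rule DERIV_continuous_on[OF D00])
  have c11: "continuous_on {0..<T} g11" by (rule DERIV_continuous_on[OF D11])
  have c22: "continuous_on {0..<T} g22" by (rule DERIV_continuous_on[OF D22])
  have c33: "continuous_on {0..<T} g33" by (rule DERIV_continuous_on[OF D33])
  note cs = c00 c11 c22 c33
  have p00: "g00 t > 0" if t: "t \<in> {0..<T}" for t
  proof (rule lin_pos[OF t, where a="\<lambda>s. - B * pSL (- g11 s) (g22 s) (g33 s) * g00 s ^ 2"])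
    show "\<And>s. s \<in> {0..<T} \<Longrightarrow> (g00 has_real_derivative (- B * pSL (- g11 s) (g22 s) (g33 s) * g00 s ^ 2) * g00 s) (at s within {0..<T})"
      using D00 by (simp add: power2_eq_square power3_eq_cube mult.assoc)
    show "continuous_on {0..<T} (\<lambda>s. - B * pSL (- g11 s) (g22 s) (g33 s) * g00 s ^ 2)"
      unfolding pSL_def by (intro continuous_intros cs)
  qed (use init pos in auto)
  have p11: "g11 t > 0" if t: "t \<in> {0..<T}" for t
  proof (rule lin_pos[OF t, where a="\<lambda>s. - B * qSL (- g11 s) (g22 s) (g33 s) * g00 s ^ 2"])
    show "\<And>s. s \<in> {0..<T} \<Longrightarrow> (g11 has_real_derivative (- B * qSL (- g11 s) (g22 s) (g33 s) * g00 s ^ 2) * g11 s) (at s within {0..<T})"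
      using D11 by simp
    show "continuous_on {0..<T} (\<lambda>s. - B * qSL (- g11 s) (g22 s) (g33 s) * g00 s ^ 2)"
      unfolding qSL_def by (intro continuous_intros cs)
  qed (use init pos in auto)
  have p22: "g22 t > 0" if t: "t \<in> {0..<T}" for t
  proof (rule lin_pos[OF t, where a="\<lambda>s. - B * qSL (g22 s) (- g11 s) (g33 s) * g00 s ^ 2"])
    show "\<And>s. s \<in> {0..<T} \<Longrightarrow> (g22 has_real_derivative (- B * qSL (g22 s) (- g11 s) (g33 s) * g00 s ^ 2) * g22 s) (at s within {0..<T})"
      using D22 by simp
    show "continuous_on {0..<T} (\<lambda>s. - B * qSL (g22 s) (- g11 s) (g33 s) * g00 s ^ 2)"
      unfolding qSL_def by (intro continuous_intros cs)
  qed (use init pos in auto)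
  have o23: "g22 t \<le> g33 t" if t: "t \<in> {0..<T}" for t
  proof -
    have "(\<lambda>s. g33 s - g22 s) t \<ge> 0"
    proof (rule lin_nonneg[OF t, where a="\<lambda>s. - B * g00 s ^ 2 * Kp (g11 s) (g22 s) (g33 s)"])
      fix s assume s: "s \<in> {0..<T}"
      have d0: "((\<lambda>s. g33 s - g22 s) has_real_derivative
         (- B * qSL (g33 s) (- g11 s) (g22 s) * g00 s ^ 2 * g33 s) - (- B * qSL (g22 s) (- g11 s) (g33 s) * g00 s ^ 2 * g22 s)) (at s within {0..<T})"
        by (intro DERIV_diff D33 D22 s)
      have eq1: "(- B * qSL (g33 s) (- g11 s) (g22 s) * g00 s ^ 2 * g33 s) - (- B * qSL (g22 s) (- g11 s) (g33 s) * g00 s ^ 2 * g22 s)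
          = (- B * g00 s ^ 2) * (qSL (g33 s) (- g11 s) (g22 s) * g33 s - qSL (g22 s) (- g11 s) (g33 s) * g22 s)"
        by (simp only: algebra_simps)
      have eq2: "(- B * g00 s ^ 2) * (qSL (g33 s) (- g11 s) (g22 s) * g33 s - qSL (g22 s) (- g11 s) (g33 s) * g22 s)
          = (- B * g00 s ^ 2 * Kp (g11 s) (g22 s) (g33 s)) * (g33 s - g22 s)"
        unfolding K_fact by (simp only: mult_ac)
      show "((\<lambda>s. g33 s - g22 s) has_real_derivative (- B * g00 s ^ 2 * Kp (g11 s) (g22 s) (g33 s)) * (g33 s - g22 s)) (at s within {0..<T})"
        using d0 unfolding eq1 eq2 .
    next
      show "continuous_on {0..<T} (\<lambda>s. - B * g00 s ^ 2 * Kp (g11 s) (g22 s) (g33 s))"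
        unfolding Kp_def by (intro continuous_intros cs)
    qed (use init ord in auto)
    then show ?thesis by simp
  qed
  define F where "F s = 3/5 * qSL (- g11 s) (g22 s) (g33 s) + qSL (g22 s) (- g11 s) (g33 s)" for s
  define h' where "h' s = g11 s powr (3/5) * g22 s * B * g00 s ^ 2 * (- F s)" for s
  have dh: "((\<lambda>t. g11 t powr (3/5) * g22 t) has_real_derivative h' s) (at s within {0..<T})"
    if s: "s \<in> {0..<T}" for s
  proof -
    have g1: "g11 s > 0" using p11 s by blast
    note DERIV_mult'[OF DERIV_chain2[OF has_real_derivative_powr[OF g1, where r="3/5"] D11[OF s]] D22[OF s]]
    moreover have "g11 s powr (3/5 - 1) * g11 s = g11 s powr (3/5)"
    proof -
      have "g11 s powr (3/5 - 1) * g11 s powr 1 = g11 s powr (3/5 - 1 + 1)" by (rule powr_add[symmetric])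
      then show ?thesis using g1 by simp
    qed
    ultimately show ?thesis unfolding h'_def F_def alg_h[OF \<open>g11 s powr (3/5 - 1) * g11 s = g11 s powr (3/5)\<close>] by blast
  qed
  have hpos: "h' s > 0" if s: "s \<in> {0..<T}" for s
  proof -
    have "F s < 0" unfolding F_def by (rule F_neg[OF p11[OF s] p22[OF s] o23[OF s]])
    moreover have "g00 s ^ 2 > 0" using p00[OF s] by simp
    moreover have "g11 s powr (3/5) > 0" using p11[OF s] by simp
    ultimately show ?thesis unfolding h'_def using p22[OF s] Bpos
      by (intro mult_pos_pos) auto
  qed
  show ?thesis
  proof (rule strict_mono_onI)
    fix r s assume r: "r \<in> {0..<T}" and s: "s \<in> {0..<T}" and rs: "r < s"
    have sub: "{r..s} \<subseteq> {0..<T}"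
    proof
      fix y assume "y \<in> {r..s}"
      then show "y \<in> {0..<T}" using r s by simp
    qed
    have "\<exists>x\<in>{r<..<s}. (\<lambda>t. g11 t powr (3/5) * g22 t) s - (\<lambda>t. g11 t powr (3/5) * g22 t) r = (*) (h' x) (s - r)"
    proof (rule mvt_simple[OF rs])
      fix x assume "r \<le> x" "x \<le> s"
      then have x: "x \<in> {0..<T}" using sub by auto
      show "((\<lambda>t. g11 t powr (3/5) * g22 t) has_derivative (*) (h' x)) (at x within {r..s})"
        using DERIV_subset[OF dh[OF x] sub] unfolding has_field_derivative_def .
    qed
    then obtain x where x: "x \<in> {r<..<s}" and e: "g11 s powr (3/5) * g22 s - g11 r powr (3/5) * g22 r = h' x * (s - r)"
      by auto
    have "x \<in> {0..<T}" using x r s by simp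
    then have "h' x * (s - r) > 0" using hpos rs by (intro mult_pos_pos) auto
    then show "g11 r powr (3/5) * g22 r < g11 s powr (3/5) * g22 s" using e by linarith
  qed
qed

end
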